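(* Let $h : \mathbb{R}^n \to \mathbb{R}$, let $l, u \in \mathbb{R}^n$ with $l \le u$, and let $S = \{x \in [l,u] : h(x) \le 0\}$. Let $\bar x \in [l,u]$ with $h(\bar x) > 0$, and let $h_{ave} : \mathbb{R}^n \to \mathbb{R}$ be a differentiable concave underestimator of $h$ at $\bar x$. Define \[ \hat h(x) = \min \{ h_{ave}(z) + \nabla h_{ave}(z)^{\mathsf T}(x - z) : z \in [l,u],\ h_{ave}(z) \ge 0 \}. \] Then the set $C = \{x \in \mathbb{R}^n : \hat h(x) \ge 0\}$ is a convex $S$-free set, and $C \supseteq \{x \in \mathbb{R}^n : h_{ave}(x) \ge 0\}$.
   Context: A function $h_{ave} : \mathbb{R}^n \to \mathbb{R}$ is a concave underestimator of $h$ at $\bar x$ if $h_{ave}$ is concave, $h_{ave}(x) \le h(x)$ for all $x \in \mathbb{R}^n$, and $h_{ave}(\bar x) = h(\bar x)$. Here $[l,u] = \{x \in \mathbb{R}^n : l_i \le x_i \le u_i \text{ for all } i\}$. A set $C$ is $S$-free if it is convex and contains no point of $S$ in its interior. *)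

theory Defs
  imports "HOL-Analysis.Analysis"
begin

definition boxset :: "real^'n \<Rightarrow> real^'n \<Rightarrow> (real^'n) set" where
  "boxset l u = {x. \<forall>i. l $ i \<le> x $ i \<and> x $ i \<le> u $ i}"

definition concave_underestimator ::
  "(real^'n \<Rightarrow> real) \<Rightarrow> (real^'n \<Rightarrow> real) \<Rightarrow> real^'n \<Rightarrow> bool" where
  "concave_underestimator hav h xbar \<longleftrightarrow>
     concave_on UNIV hav \<and> (\<forall>x. hav x \<le> h x) \<and> hav xbar = h xbar"

definition S_free :: "(real^'n) set \<Rightarrow> (real^'n) set \<Rightarrow> bool" where
  "S_free S C \<longleftrightarrow> convex C \<and> (\<forall>x\<in>S. x \<notin> interior C)"

end

theory Submission
  imports Defs
begin
lemma tangent: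
  fixes hav :: "real^'n \<Rightarrow> real" and grad :: "real^'n \<Rightarrow> real^'n"
  assumes cc: "concave_on UNIV hav"
    and grad: "\<And>z. (hav has_derivative (\<lambda>v. grad z \<bullet> v)) (at z)"
  shows "hav y \<le> hav z + grad z \<bullet> (y - z)"
proof -
  define p where "p = (\<lambda>t::real. - hav (z + t *\<^sub>R (y - z)))"
  have cv: "convex_on UNIV p"
  proof (rule convex_onI)
    fix t a b :: real assume t: "0 < t" "t < 1"
    have "z + ((1 - t) *\<^sub>R a + t *\<^sub>R b) *\<^sub>R (y - z)
        = (1 - t) *\<^sub>R (z + a *\<^sub>R (y - z)) + t *\<^sub>R (z + b *\<^sub>R (y - z))"
      by (simp add: algebra_simps)
    moreover have "- hav ((1 - t) *\<^sub>R (z + a *\<^sub>R (y - z)) + t *\<^sub>R (z + b *\<^sub>R (y - z)))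
       \<le> (1 - t) * (- hav (z + a *\<^sub>R (y - z))) + t * (- hav (z + b *\<^sub>R (y - z)))"
      using convex_onD[OF cc[unfolded concave_on_def], of t] t by auto
    ultimately show "p ((1 - t) *\<^sub>R a + t *\<^sub>R b) \<le> (1 - t) * p a + t * p b"
      unfolding p_def by simp
  qed simp
  have d1: "((\<lambda>t::real. z + t *\<^sub>R (y - z)) has_derivative (\<lambda>t. t *\<^sub>R (y - z))) (at 0)"
    by (auto intro!: derivative_eq_intros)
  have "((\<lambda>t. hav (z + t *\<^sub>R (y - z))) has_derivative (\<lambda>t. grad z \<bullet> (t *\<^sub>R (y - z)))) (at 0)"
    using has_derivative_compose[OF d1, of hav "\<lambda>v. grad z \<bullet> v"] grad[of z] by simp
  hence "(p has_derivative (\<lambda>t. - (grad z \<bullet> (t *\<^sub>R (y - z))))) (at 0)"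
    unfolding p_def by (rule has_derivative_minus)
  moreover have "(\<lambda>t. - (grad z \<bullet> (t *\<^sub>R (y - z)))) = (*) (- (grad z \<bullet> (y - z)))"
    by (auto simp: fun_eq_iff)
  ultimately have "(p has_field_derivative (- (grad z \<bullet> (y - z)))) (at 0 within UNIV)"
    by (simp add: has_field_derivative_def)
  from convex_on_imp_above_tangent[OF cv _ _ _ this, of 1]
  have "p 1 - p 0 \<ge> - (grad z \<bullet> (y - z)) * (1 - 0)" by simp
  thus ?thesis unfolding p_def by simp
qed

theorem proposition1:
  fixes h hav :: "real^'n \<Rightarrow> real"
    and grad :: "real^'n \<Rightarrow> real^'n"
    and l u xbar :: "real^'n"
  assumes lu: "\<forall>i. l $ i \<le> u $ i"
    and xbar_box: "xbar \<in> boxset l u"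
    and hxbar: "h xbar > 0"
    and under: "concave_underestimator hav h xbar"
    and grad: "\<And>z. (hav has_derivative (\<lambda>v. grad z \<bullet> v)) (at z)"
  shows "S_free {x \<in> boxset l u. h x \<le> 0}
           {x. Inf {hav z + grad z \<bullet> (x - z) | z. z \<in> boxset l u \<and> hav z \<ge> 0} \<ge> 0}
       \<and> {x. hav x \<ge> 0} \<subseteq>
           {x. Inf {hav z + grad z \<bullet> (x - z) | z. z \<in> boxset l u \<and> hav z \<ge> 0} \<ge> 0}"
proof -
  have cc: "concave_on UNIV hav" and le: "\<And>x. hav x \<le> h x" and eqx: "hav xbar = h xbar"
    using under unfolding concave_underestimator_def by auto
  have tg: "\<And>y z. hav y \<le> hav z + grad z \<bullet> (y - z)" using tangent[OF cc grad] by blast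
  define T where "T = (\<lambda>x. {hav z + grad z \<bullet> (x - z) | z. z \<in> boxset l u \<and> hav z \<ge> 0})"
  define C where "C = {x. Inf (T x) \<ge> 0}"
  have ne: "T x \<noteq> {}" for x
    unfolding T_def using xbar_box hxbar eqx by force
  have bdd: "bdd_below (T x)" for x
    unfolding T_def bdd_below_def using tg by force
  have memC: "x \<in> C \<longleftrightarrow> (\<forall>z. z \<in> boxset l u \<and> hav z \<ge> 0 \<longrightarrow> 0 \<le> hav z + grad z \<bullet> (x - z))" for x
  proof
    assume "x \<in> C"
    hence "Inf (T x) \<ge> 0" unfolding C_def by simp
    thus "\<forall>z. z \<in> boxset l u \<and> hav z \<ge> 0 \<longrightarrow> 0 \<le> hav z + grad z \<bullet> (x - z)"
      using cInf_lower[OF _ bdd[of x]] unfolding T_def by force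
  next
    assume a: "\<forall>z. z \<in> boxset l u \<and> hav z \<ge> 0 \<longrightarrow> 0 \<le> hav z + grad z \<bullet> (x - z)"
    have "0 \<le> Inf (T x)"
      by (rule cInf_greatest[OF ne]) (use a in \<open>auto simp: T_def\<close>)
    thus "x \<in> C" unfolding C_def by simp
  qed
  have conv: "convex C"
  proof (rule convexI)
    fix x y :: "real^'n" and a b :: real
    assume xy: "x \<in> C" "y \<in> C" and ab: "0 \<le> a" "0 \<le> b" "a + b = 1"
    show "a *\<^sub>R x + b *\<^sub>R y \<in> C"
      unfolding memC
    proof (intro allI impI)
      fix z assume z: "z \<in> boxset l u \<and> 0 \<le> hav z"
      have "0 \<le> a * (hav z + grad z \<bullet> (x - z)) + b * (hav z + grad z \<bullet> (y - z))"
        using xy z ab memC by (simp add: add_nonneg_nonneg)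
      also have "\<dots> = hav z + grad z \<bullet> (a *\<^sub>R x + b *\<^sub>R y - z)"
      proof -
        have "a *\<^sub>R x + b *\<^sub>R y - z = a *\<^sub>R (x - z) + b *\<^sub>R (y - z)"
          using ab(3) by (simp add: algebra_simps flip: scaleR_add_left)
        thus ?thesis using ab(3) by (simp add: inner_add_right algebra_simps flip: distrib_right)
      qed
      finally show "0 \<le> hav z + grad z \<bullet> (a *\<^sub>R x + b *\<^sub>R y - z)" .
    qed
  qed
  have sub: "{x. hav x \<ge> 0} \<subseteq> C"
    using memC tg by (smt (verit) mem_Collect_eq subsetI)
  have free: "x \<notin> interior C" if xS: "x \<in> boxset l u" "h x \<le> 0" for x
  proof
    assume xi: "x \<in> interior C"
    have hx: "hav x \<le> 0" using le[of x] xS by simp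
    have xne: "xbar \<noteq> x" using xS hxbar by auto
    define d where "d = xbar - x"
    define phi where "phi = (\<lambda>t::real. hav (x + t *\<^sub>R d))"
    have "continuous_on {0..1} phi"
    proof -
      have ch: "continuous_on UNIV hav"
        using grad has_derivative_continuous continuous_at_imp_continuous_on by blast
      have "continuous_on {0..1} (\<lambda>t::real. x + t *\<^sub>R d)" by (intro continuous_intros)
      from continuous_on_compose2[OF ch this] show ?thesis unfolding phi_def by simp
    qed
    then obtain s where s: "0 \<le> s" "s \<le> 1" "phi s = 0"
    proof -
      have "phi 0 = hav x" "phi 1 = hav xbar" unfolding phi_def d_def by simp_all
      hence "phi 0 \<le> 0" "0 \<le> phi 1" using hx hxbar eqx by simp_all
      from IVT'[of phi 0 0 1, OF this] \<open>continuous_on {0..1} phi\<close> show ?thesis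
        using that by auto
    qed
    define z where "z = x + s *\<^sub>R d"
    have s1: "s < 1" using s hxbar eqx unfolding phi_def d_def by (cases "s = 1") auto
    have hz: "hav z = 0" using s unfolding z_def phi_def by simp
    have zbox: "z \<in> boxset l u"
    proof -
      have "z = (1 - s) *\<^sub>R x + s *\<^sub>R xbar" unfolding z_def d_def by (simp add: algebra_simps)
      moreover have "(1 - s) * x $ i + s * xbar $ i \<ge> l $ i \<and> (1 - s) * x $ i + s * xbar $ i \<le> u $ i" for i
      proof -
        have "x $ i \<ge> l $ i" "x $ i \<le> u $ i" "xbar $ i \<ge> l $ i" "xbar $ i \<le> u $ i"
          using xS xbar_box unfolding boxset_def by auto
        moreover have "(1 - s) * l $ i \<le> (1 - s) * x $ i" "(1 - s) * x $ i \<le> (1 - s) * u $ i"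
          "s * l $ i \<le> s * xbar $ i" "s * xbar $ i \<le> s * u $ i"
          using s s1 calculation by (simp_all add: mult_left_mono)
        ultimately show ?thesis by (simp add: algebra_simps)
      qed
      ultimately show ?thesis unfolding boxset_def by simp
    qed
    have "hav xbar \<le> hav z + grad z \<bullet> (xbar - z)" by (rule tg)
    moreover have "xbar - z = (1 - s) *\<^sub>R d" unfolding z_def d_def by (simp add: algebra_simps)
    ultimately have "0 < (1 - s) * (grad z \<bullet> d)" using hz hxbar eqx by simp
    hence g: "grad z \<bullet> d > 0" using s1 by (simp add: zero_less_mult_iff)
    obtain e where e: "e > 0" "ball x e \<subseteq> C" using xi by (meson mem_interior)
    define t where "t = e / (2 * (norm d + 1))"
    have nd: "2 * (norm d + 1) > (0::real)" by (smt (verit) norm_ge_zero)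
    have t: "t > 0" unfolding t_def using e nd by simp
    define y where "y = x - t *\<^sub>R d"
    have "dist x y = t * norm d" unfolding y_def dist_norm using t by simp
    also have "\<dots> < e"
    proof -
      have "t * norm d \<le> t * (norm d + 1)" using t by simp
      also have "\<dots> = e / 2" unfolding t_def using nd by (simp add: field_simps)
      finally show ?thesis using e by simp
    qed
    finally have "y \<in> C" using e by auto
    hence "0 \<le> hav z + grad z \<bullet> (y - z)" using memC zbox hz by (metis order_refl)
    moreover have "y - z = - (t + s) *\<^sub>R d" unfolding y_def z_def by (simp add: algebra_simps)
    ultimately have "0 \<le> - (t + s) * (grad z \<bullet> d)" using hz by simp
    moreover have "(t + s) * (grad z \<bullet> d) > 0" using t s g by simp
    ultimately show False by (simp add: algebra_simps)
  qed
  show ?thesis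
    using conv sub free unfolding S_free_def C_def T_def by auto
qed
end
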